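(* Let $\alpha,\beta>-1$, $n\ge1$, and $d_{k,n}$ as defined below. For $0\le k\le n$: (i) if $\alpha>\beta$ and $\alpha+\beta\ge-1$, then $d_{k,n}>0$; (ii) if $\alpha<\beta$ and $\alpha+\beta\ge-1$, then $(-1)^{n-k}d_{k,n}>0$; (iii) if $\alpha=\beta>-\tfrac12$, then $d_{k,n}>0$ when $n-k$ is even and $d_{k,n}=0$ when $n-k$ is odd; if $\alpha=\beta=-\tfrac12$, then $d_{n,n}>0$ and $d_{k,n}=0$ for $k=1,\dots,n-1$.
   Context: For $\alpha,\beta>-1$ and $0\le k\le n$, $d_{k,n}=\frac{(n+\alpha+\beta+1)_k(k+\alpha+1)_{n-k}}{(n-k)!\,2^{2k}\Gamma(k+1)}\,{}_3F_2\!\left[\begin{matrix}k-n,\ n+k+\alpha+\beta+1,\ k+\frac12\\ k+\alpha+1,\ 2k+1\end{matrix};1\right]$, with $(a)_k$ the Pochhammer symbol and ${}_3F_2$ the generalized hypergeometric series. Equivalently, $P_n^{(\alpha,\beta)}(x)=d_{0,n}+2\sum_{k=1}^n d_{k,n}T_k(x)$, where $P_n^{(\alpha,\beta)}$ is the Jacobi polynomial and $T_k$ the Chebyshev polynomial of the first kind. *)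

theory Defs
  imports "HOL-Analysis.Analysis"
begin

definition hyp3F2 :: "real \<Rightarrow> real \<Rightarrow> real \<Rightarrow> real \<Rightarrow> real \<Rightarrow> real \<Rightarrow> real" where
  "hyp3F2 a1 a2 a3 b1 b2 z =
     (\<Sum>j. pochhammer a1 j * pochhammer a2 j * pochhammer a3 j
           / (pochhammer b1 j * pochhammer b2 j * fact j) * z ^ j)"

text \<open>Chebyshev coefficient d_{k,n} of the Jacobi polynomial P_n^{(alpha,beta)}.\<close>
definition dcoef :: "real \<Rightarrow> real \<Rightarrow> nat \<Rightarrow> nat \<Rightarrow> real" where
  "dcoef \<alpha> \<beta> k n =
     pochhammer (real n + \<alpha> + \<beta> + 1) k * pochhammer (real k + \<alpha> + 1) (n - k)
     / (fact (n - k) * 2 ^ (2 * k) * Gamma (real k + 1))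
     * hyp3F2 (real k - real n) (real n + real k + \<alpha> + \<beta> + 1) (real k + 1 / 2)
              (real k + \<alpha> + 1) (2 * real k + 1) 1"

end

theory Submission
  imports Defs
begin

definition FF :: "real \<Rightarrow> real \<Rightarrow> nat \<Rightarrow> nat \<Rightarrow> real" where
  "FF \<alpha> s n i = pochhammer (real n + s) i * pochhammer (real i + \<alpha> + 1) (n - i)
      * pochhammer (1/2) i / fact (n - i)"

definition DD :: "real \<Rightarrow> real \<Rightarrow> nat \<Rightarrow> nat \<Rightarrow> real" where
  "DD \<alpha> s n k = (\<Sum>j\<le>n - k. (-1)^j * FF \<alpha> s n (k + j) / (fact (2*k + j) * fact j))"

lemma poch_minus_nat:
  assumes "j \<le> m"
  shows "pochhammer (- real m) j = (-1)^j * fact m / fact (m - j)"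
proof -
  have "fact m = (pochhammer 1 (m - j) :: real) * pochhammer (1 + real (m - j)) j"
    using pochhammer_product[of "m - j" m "1::real"] assms by (simp add: pochhammer_fact)
  hence "fact m = fact (m - j) * (pochhammer (real m - real j + 1) j :: real)"
    using assms by (simp add: pochhammer_fact of_nat_diff add.commute)
  thus ?thesis
    by (simp add: pochhammer_minus)
qed

lemma fact_add_poch: "fact (a + j) = (fact a :: real) * pochhammer (real a + 1) j"
proof -
  have "fact (a + j) = (pochhammer 1 (a + j) :: real)" by (simp add: pochhammer_fact)
  also have "\<dots> = pochhammer 1 a * pochhammer (1 + real a) j" by (rule pochhammer_product')
  finally show ?thesis by (simp add: pochhammer_fact add.commute)
qed

lemma hyp_finite:
  assumes "k \<le> n"
  shows "hyp3F2 (real k - real n) b c d e z =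
    (\<Sum>j\<le>n-k. pochhammer (real k - real n) j * pochhammer b j * pochhammer c j
           / (pochhammer d j * pochhammer e j * fact j) * z ^ j)"
  unfolding hyp3F2_def
proof (rule suminf_finite)
  fix j assume "j \<notin> {..n-k}"
  hence "j > n - k" by simp
  moreover have "real k - real n = - real (n - k)" using assms by (simp add: of_nat_diff)
  ultimately have "pochhammer (real k - real n) j = 0"
    using pochhammer_of_nat_eq_0_iff[of "n-k" j, where 'a=real] by metis
  thus "pochhammer (real k - real n) j * pochhammer b j * pochhammer c j
           / (pochhammer d j * pochhammer e j * fact j) * z ^ j = 0" by simp
qed simp
lemma dcoef_eq:
  assumes "k \<le> n" "\<alpha> > -1"
  shows "dcoef \<alpha> \<beta> k n = DD \<alpha> (\<alpha>+\<beta>+1) n k"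
proof -
  define m where "m = n - k"
  define s where "s = \<alpha>+\<beta>+1"
  have nm: "n = k + m" using assms m_def by simp
  have "dcoef \<alpha> \<beta> k n = (\<Sum>j\<le>m.
     pochhammer (real n + s) k * pochhammer (real k + \<alpha> + 1) m
     / (fact m * 2 ^ (2 * k) * fact k) *
     (pochhammer (- real m) j * pochhammer (real n + real k + s) j * pochhammer (real k + 1 / 2) j
           / (pochhammer (real k + \<alpha> + 1) j * pochhammer (2 * real k + 1) j * fact j)))"
  proof -
    have e1: "real k - real n = - real m" using assms by (simp add: m_def of_nat_diff)
    have e2: "Gamma (real k + 1) = fact k" using Gamma_fact[of k] by (simp add: add.commute)
    show ?thesis
      unfolding dcoef_def hyp_finite[OF assms(1)] sum_distrib_left
      unfolding e1 e2 m_def[symmetric]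
      by (simp add: s_def add_ac)
  qed
  also have "\<dots> = (\<Sum>j\<le>m. (-1)^j * FF \<alpha> s n (k + j) / (fact (2*k + j) * fact j))"
  proof (rule sum.cong[OF refl])
    fix j assume "j \<in> {..m}"
    hence jm: "j \<le> m" by simp
    have p1: "pochhammer (real n + s) (k + j) = pochhammer (real n + s) k * pochhammer (real n + real k + s) j"
      using pochhammer_product'[of "real n + s" k j] by (simp add: add_ac)
    have p2: "pochhammer (real k + \<alpha> + 1) m = pochhammer (real k + \<alpha> + 1) j * pochhammer (real (k + j) + \<alpha> + 1) (n - (k + j))"
      using pochhammer_product[OF jm, of "real k + \<alpha> + 1"] by (simp add: nm add_ac)
    have p3: "pochhammer (1/2::real) (k + j) = pochhammer (1/2) k * pochhammer (real k + 1/2) j"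
      using pochhammer_product'[of "1/2::real" k j] by (simp add: add_ac)
    have p4: "fact (2*k + j) = (fact (2*k) :: real) * pochhammer (2 * real k + 1) j"
      using fact_add_poch[of "2*k" j] by simp
    have p5: "fact (2*k) = (2 ^ (2 * k) * pochhammer (1 / 2) k * fact k :: real)"
      by (rule fact_double)
    have p6: "pochhammer (- real m) j = (-1)^j * fact m / fact (m - j)" by (rule poch_minus_nat[OF jm])
    have nkj: "n - (k + j) = m - j" using nm by simp
    have q1: "pochhammer (real k + \<alpha> + 1) j > 0" using assms by (intro pochhammer_pos) simp
    have q2: "pochhammer (1/2::real) k > 0" by (intro pochhammer_pos) simp
    have q3: "pochhammer (2 * real k + 1) j > 0" by (intro pochhammer_pos) simp
    show "pochhammer (real n + s) k * pochhammer (real k + \<alpha> + 1) m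
     / (fact m * 2 ^ (2 * k) * fact k) *
     (pochhammer (- real m) j * pochhammer (real n + real k + s) j * pochhammer (real k + 1 / 2) j
           / (pochhammer (real k + \<alpha> + 1) j * pochhammer (2 * real k + 1) j * fact j))
       = (-1)^j * FF \<alpha> s n (k + j) / (fact (2*k + j) * fact j)"
      unfolding FF_def p1 p2 p3 p4 p5 p6 nkj
      using q1 q2 q3 by (simp add: field_simps)
  qed
  finally show ?thesis by (simp add: DD_def m_def s_def)
qed

lemma FF_ratio:
  assumes "i < n"
  shows "FF \<alpha> s n (Suc i) * (real i + \<alpha> + 1)
       = FF \<alpha> s n i * (real n + s + real i) * (real i + 1/2) * (real n - real i)"
proof -
  obtain d where d: "n - i = Suc d" using assms by (metis Suc_diff_Suc)
  have d2: "n - Suc i = d" using d by simp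
  have rn: "real n - real i = real (Suc d)" using d assms by (simp add: of_nat_diff[symmetric])
  have pa: "pochhammer (real i + \<alpha> + 1) (Suc d) = (real i + \<alpha> + 1) * pochhammer (real (Suc i) + \<alpha> + 1) d"
    by (simp add: pochhammer_rec add_ac)
  have fa: "fact (Suc d) = real (Suc d) * fact d" by simp
  show ?thesis
    unfolding FF_def d d2 rn pa fa
    apply (simp add: pochhammer_Suc)
    done
qed

lemma telescope_sum:
  fixes G H :: "nat \<Rightarrow> real"
  assumes "\<And>r. r < M \<Longrightarrow> H r = - G (Suc r)" "H M = 0" "G 0 = 0"
  shows "(\<Sum>r\<le>M. H r + G r) = 0"
proof -
  have "(\<Sum>r\<le>M. H r) = - (\<Sum>r<M. G (Suc r))"
    using assms(1,2) by (simp add: lessThan_Suc_atMost[symmetric] sum_negf)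
  moreover have "(\<Sum>r\<le>M. G r) = (\<Sum>r<M. G (Suc r))"
  proof (cases M)
    case 0 then show ?thesis using assms(3) by simp
  next
    case (Suc N)
    show ?thesis unfolding Suc sum.atMost_Suc_shift using assms(3)
      by (simp add: lessThan_Suc_atMost)
  qed
  ultimately show ?thesis by (simp add: sum.distrib)
qed

lemma DD_rec_gen:
  fixes \<alpha> \<beta> :: real
  assumes k1: "1 \<le> k" and kn: "k \<le> n"
  defines "s \<equiv> \<alpha> + \<beta> + 1"
  shows "(real n - real k + 1) * (real n + real k - 1 + s) * DD \<alpha> s n (k - 1)
         - 2 * (\<alpha> - \<beta>) * real k * DD \<alpha> s n k
         - (real n + real k + 1) * (real n - real k - 1 + s) * (if k < n then DD \<alpha> s n (k + 1) else 0) = 0"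
proof -
  define M where "M = Suc (n - k)"
  define W where "W r = (-1)^r * FF \<alpha> s n (k - 1 + r) / (fact (2*k + r) * fact r)" for r
  define A where "A = (real n - real k + 1) * (real n + real k - 1 + s)"
  define B where "B = 2 * (\<alpha> - \<beta>) * real k"
  define C where "C = (real n + real k + 1) * (real n - real k - 1 + s)"
  define G where "G r = W r * (real k - 1 + real r + \<alpha>) * (2 * real k + real r) * real r" for r
  define H where "H r = W r * (real n + s + real k - 1 + real r) * (real k - 1/2 + real r)
                     * (real n - real k + 1 - real r)" for r
  have S1: "(\<Sum>r\<le>M. W r * ((2 * real k + real r) * (2 * real k + real r - 1))) = DD \<alpha> s n (k - 1)"
    unfolding DD_def
  proof -
    have nM: "n - (k - 1) = M" using k1 kn by (simp add: M_def)
    show "(\<Sum>r\<le>M. W r * ((2 * real k + real r) * (2 * real k + real r - 1))) =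
      (\<Sum>j\<le>n - (k - 1). (- 1) ^ j * FF \<alpha> s n (k - 1 + j) / (fact (2 * (k - 1) + j) * fact j))"
      unfolding nM
    proof (rule sum.cong[OF refl])
      fix r assume "r \<in> {..M}"
      have e: "2 * k + r = Suc (Suc (2 * (k - 1) + r))" using k1 by simp
      have e2: "real (2 * (k - 1) + r) = 2 * real k + real r - 2" using k1 by (simp add: of_nat_diff)
      define X where "X = (2 * real k + real r) * (2 * real k + real r - 1)"
      have f: "fact (2 * k + r) = X * fact (2 * (k - 1) + r)"
        unfolding e fact_Suc of_nat_Suc e2 X_def by (simp add: algebra_simps)
      have pos: "X \<noteq> 0" using k1 unfolding X_def by simp
      show "W r * ((2 * real k + real r) * (2 * real k + real r - 1)) =
          (- 1) ^ r * FF \<alpha> s n (k - 1 + r) / (fact (2 * (k - 1) + r) * fact r)"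
        unfolding W_def f X_def[symmetric] using pos by (simp add: field_simps)
    qed
  qed
  have S2: "(\<Sum>r\<le>M. W r * ((2 * real k + real r) * real r)) = - DD \<alpha> s n k"
    unfolding DD_def M_def sum.atMost_Suc_shift sum_negf[symmetric]
  proof (simp, rule sum.cong[OF refl])
    fix j assume "j \<in> {..n-k}"
    have e: "k - 1 + Suc j = k + j" using k1 by simp
    define Y where "Y = (2 * real k + (1 + real j)) * (1 + real j)"
    have f: "fact (2 * k + Suc j) * fact (Suc j) = Y * (fact (2 * k + j) * fact j)"
      unfolding Y_def by (simp add: algebra_simps)
    have pos: "Y \<noteq> 0" unfolding Y_def by (simp add: add_pos_nonneg)
    show "W (Suc j) * ((2 * real k + (1 + real j)) * (1 + real j)) =
          - ((- 1) ^ j * FF \<alpha> s n (k + j) / (fact (2 * k + j) * fact j))"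
      unfolding W_def e f Y_def[symmetric] using pos by (simp add: field_simps)
  qed
  have S3: "(\<Sum>r\<le>M. W r * (real r * (real r - 1))) = (if k < n then DD \<alpha> s n (k + 1) else 0)"
  proof (cases "k < n")
    case True
    have eM: "M = Suc (Suc (n - (k + 1)))" using True by (simp add: M_def)
    have "(\<Sum>r\<le>M. W r * (real r * (real r - 1)))
        = W 0 * (real 0 * (real 0 - 1)) + (W (Suc 0) * (real (Suc 0) * (real (Suc 0) - 1))
          + (\<Sum>j\<le>n-(k+1). W (Suc (Suc j)) * (real (Suc (Suc j)) * (real (Suc (Suc j)) - 1))))"
      unfolding eM sum.atMost_Suc_shift by simp
    also have "\<dots> = (\<Sum>j\<le>n-(k+1). W (Suc (Suc j)) * (real (Suc (Suc j)) * (real (Suc (Suc j)) - 1)))"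
      by simp
    also have "\<dots> = DD \<alpha> s n (k + 1)"
      unfolding DD_def
    proof (rule sum.cong[OF refl])
      fix j assume "j \<in> {..n - (k + 1)}"
      have e: "k - 1 + Suc (Suc j) = k + 1 + j" using k1 by simp
      have e3: "2 * k + Suc (Suc j) = 2 * (k + 1) + j" by simp
      define Y where "Y = real (Suc (Suc j)) * (real (Suc (Suc j)) - 1)"
      have f: "fact (Suc (Suc j)) = Y * fact j"
        unfolding Y_def by (simp add: algebra_simps)
      have pos: "Y \<noteq> 0" unfolding Y_def by simp
      define Z where "Z = (fact (2 * (k + 1) + j) :: real)"
      have Zp: "Z \<noteq> 0" unfolding Z_def by simp
      show "W (Suc (Suc j)) * (real (Suc (Suc j)) * (real (Suc (Suc j)) - 1)) =
          (- 1) ^ j * FF \<alpha> s n (k + 1 + j) / (fact (2 * (k + 1) + j) * fact j)"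
        unfolding W_def e e3 f Y_def[symmetric] Z_def[symmetric] using pos Zp by (simp add: field_simps)
    qed
    finally show ?thesis using True by simp
  next
    case False
    hence "M = Suc 0" using kn by (simp add: M_def)
    thus ?thesis using False by simp
  qed
  have T: "(\<Sum>r\<le>M. H r + G r) = 0"
  proof (rule telescope_sum)
    show "G 0 = 0" by (simp add: G_def)
    show "H M = 0" by (simp add: H_def M_def of_nat_diff kn)
    fix r assume r: "r < M"
    hence i: "k - 1 + r < n" using k1 kn by (simp add: M_def)
    have ki: "Suc (k - 1 + r) = k + r" using k1 by simp
    have rat: "FF \<alpha> s n (k + r) * (real (k - 1 + r) + \<alpha> + 1)
       = FF \<alpha> s n (k - 1 + r) * (real n + s + real (k - 1 + r)) * (real (k - 1 + r) + 1/2) * (real n - real (k - 1 + r))"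
      using FF_ratio[OF i, of \<alpha> s] unfolding ki .
    have ck: "real (k - 1 + r) = real k - 1 + real r" using k1 by (simp add: of_nat_diff)
    have e3: "k - 1 + Suc r = k + r" using k1 by simp
    have rat': "FF \<alpha> s n (k + r) * (real k + real r + \<alpha>) = FF \<alpha> s n (k - 1 + r)
        * (real n + s + real k - 1 + real r) * (real k - 1/2 + real r) * (real n - real k + 1 - real r)"
      using rat unfolding ck by (simp add: algebra_simps)
    have g: "- G (Suc r) = (-1)^r * (FF \<alpha> s n (k + r) * (real k + real r + \<alpha>)) / (fact (2*k + r) * fact r)"
    proof -
      define Y where "Y = (2 * real k + real (Suc r)) * real (Suc r)"
      have f: "fact (2 * k + Suc r) * fact (Suc r) = Y * (fact (2 * k + r) * fact r)"
        unfolding Y_def by (simp add: algebra_simps)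
      have pos: "Y \<noteq> 0" unfolding Y_def by (simp add: add_pos_nonneg)
      have g1: "G (Suc r) = W (Suc r) * (real k + real r + \<alpha>) * Y"
        unfolding G_def Y_def by (simp add: algebra_simps)
      have g2: "W (Suc r) = (-1)^(Suc r) * FF \<alpha> s n (k + r) / (Y * (fact (2 * k + r) * fact r))"
        unfolding W_def e3 f ..
      show ?thesis unfolding g1 g2 using pos by (simp add: field_simps)
    qed
    show "H r = - G (Suc r)"
      unfolding g rat' unfolding H_def W_def by (simp add: field_simps)
  qed
  have P: "\<And>r. W r * (A * ((2 * real k + real r) * (2 * real k + real r - 1))
                + B * ((2 * real k + real r) * real r) - C * (real r * (real r - 1)))
            = 4 * real k * (H r + G r)"
    unfolding A_def B_def C_def G_def H_def s_def by (simp add: field_simps)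
  have "(\<Sum>r\<le>M. W r * (A * ((2 * real k + real r) * (2 * real k + real r - 1))
                + B * ((2 * real k + real r) * real r) - C * (real r * (real r - 1)))) = 0"
    unfolding P sum_distrib_left[symmetric] T by simp
  hence "A * (\<Sum>r\<le>M. W r * ((2 * real k + real r) * (2 * real k + real r - 1)))
       + B * (\<Sum>r\<le>M. W r * ((2 * real k + real r) * real r))
       - C * (\<Sum>r\<le>M. W r * (real r * (real r - 1))) = 0"
    by (simp add: algebra_simps sum.distrib sum_subtractf sum_distrib_left)
  thus ?thesis unfolding S1 S2 S3 A_def B_def C_def by simp
qed

lemma pos_down:
  fixes D a b c :: "nat \<Rightarrow> real"
  assumes Dn: "D n > 0"
    and rec: "\<And>k. 1 \<le> k \<Longrightarrow> k \<le> n \<Longrightarrow> a k * D (k - 1) = b k * D k + c k * (if k < n then D (k + 1) else 0)"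
    and a: "\<And>k. 1 \<le> k \<Longrightarrow> k \<le> n \<Longrightarrow> a k > 0"
    and b: "\<And>k. 1 \<le> k \<Longrightarrow> k \<le> n \<Longrightarrow> b k > 0"
    and c: "\<And>k. 1 \<le> k \<Longrightarrow> k < n \<Longrightarrow> c k \<ge> 0"
  shows "j \<le> n \<Longrightarrow> D j > 0"
proof -
  have main: "\<forall>j. n - t \<le> j \<and> j \<le> n \<longrightarrow> D j > 0" if "t \<le> n" for t
    using that
  proof (induction t)
    case 0 then show ?case using Dn by auto
  next
    case (Suc t)
    hence IH: "\<forall>j. n - t \<le> j \<and> j \<le> n \<longrightarrow> D j > 0" by simp
    define k where "k = n - t"
    have k1: "1 \<le> k" "k \<le> n" using Suc.prems by (auto simp: k_def)
    have Dk: "D k > 0" using IH k_def by simp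
    have X: "(if k < n then D (k + 1) else 0) \<ge> 0" using IH k_def by (auto intro: less_imp_le)
    have cX: "c k * (if k < n then D (k + 1) else 0) \<ge> 0"
      using X c[OF k1(1)] by (cases "k < n") auto
    have "b k * D k > 0" using b[OF k1] Dk by simp
    hence "a k * D (k - 1) > 0" using rec[OF k1] cX by simp
    hence Dk1: "D (k - 1) > 0" using a[OF k1] by (simp add: zero_less_mult_iff)
    show ?case
    proof (intro allI impI)
      fix j assume j: "n - Suc t \<le> j \<and> j \<le> n"
      show "D j > 0"
      proof (cases "j = k - 1")
        case True then show ?thesis using Dk1 by simp
      next
        case False
        hence "n - t \<le> j" using j k_def Suc.prems by auto
        then show ?thesis using IH j by simp
      qed
    qed
  qed
  show "j \<le> n \<Longrightarrow> D j > 0"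
  proof -
    assume j: "j \<le> n"
    have e: "n - (n - j) = j" using j by simp
    have "\<forall>j'. n - (n - j) \<le> j' \<and> j' \<le> n \<longrightarrow> D j' > 0" by (rule main) simp
    hence "\<forall>j'. j \<le> j' \<and> j' \<le> n \<longrightarrow> D j' > 0" unfolding e .
    thus ?thesis using j by blast
  qed
qed

lemma parity_down:
  fixes D a c :: "nat \<Rightarrow> real"
  assumes Dn: "D n > 0"
    and rec: "\<And>k. 1 \<le> k \<Longrightarrow> k \<le> n \<Longrightarrow> a k * D (k - 1) = c k * (if k < n then D (k + 1) else 0)"
    and a: "\<And>k. 1 \<le> k \<Longrightarrow> k \<le> n \<Longrightarrow> a k > 0"
    and c: "\<And>k. 1 \<le> k \<Longrightarrow> k < n \<Longrightarrow> c k > 0"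
  shows "j \<le> n \<Longrightarrow> (even (n - j) \<longrightarrow> D j > 0) \<and> (odd (n - j) \<longrightarrow> D j = 0)"
proof -
  let ?P = "\<lambda>j. (even (n - j) \<longrightarrow> D j > 0) \<and> (odd (n - j) \<longrightarrow> D j = 0)"
  have main: "\<forall>j. n - t \<le> j \<and> j \<le> n \<longrightarrow> ?P j" if "t \<le> n" for t
    using that
  proof (induction t)
    case 0 then show ?case using Dn by auto
  next
    case (Suc t)
    hence IH: "\<forall>j. n - t \<le> j \<and> j \<le> n \<longrightarrow> ?P j" by simp
    define k where "k = n - t"
    have k1: "1 \<le> k" "k \<le> n" using Suc.prems by (auto simp: k_def)
    have "?P (k - 1)"
    proof (cases "k < n")
      case False
      hence "k = n" using k1 by simp
      hence "a k * D (k - 1) = 0" using rec[OF k1] by simp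
      hence "D (k - 1) = 0" using a[OF k1] by simp
      moreover have "n - (k - 1) = 1" using \<open>k = n\<close> k1 by simp
      ultimately show ?thesis by simp
    next
      case True
      have P1: "?P (k + 1)" using IH k_def True by simp
      have eq: "D (k - 1) = c k / a k * D (k + 1)" using rec[OF k1] True a[OF k1]
        by (simp add: field_simps)
      have pos: "c k / a k > 0" using c[OF k1(1) True] a[OF k1] by simp
      have par: "n - (k - 1) = Suc (Suc (n - (k + 1)))" using True k1 by simp
      have e1: "even (n - (k - 1)) \<longleftrightarrow> even (n - (k + 1))" unfolding par by simp
      show ?thesis
      proof (cases "even (n - (k + 1))")
        case True
        hence "D (k + 1) > 0" using P1 by blast
        hence "D (k - 1) > 0" unfolding eq using pos by (rule mult_pos_pos[rotated])
        thus ?thesis using e1 True by blast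
      next
        case False
        hence "D (k + 1) = 0" using P1 by blast
        hence "D (k - 1) = 0" unfolding eq by simp
        thus ?thesis using e1 False by blast
      qed
    qed
    show ?case
    proof (intro allI impI)
      fix j assume j: "n - Suc t \<le> j \<and> j \<le> n"
      show "?P j"
      proof (cases "j = k - 1")
        case True then show ?thesis using \<open>?P (k - 1)\<close> by simp
      next
        case False
        hence "n - t \<le> j" using j k_def Suc.prems by auto
        then show ?thesis using IH j by blast
      qed
    qed
  qed
  show "j \<le> n \<Longrightarrow> ?P j"
  proof -
    assume j: "j \<le> n"
    have e: "n - (n - j) = j" using j by simp
    have "\<forall>j'. n - (n - j) \<le> j' \<and> j' \<le> n \<longrightarrow> ?P j'" by (rule main) simp
    hence "\<forall>j'. j \<le> j' \<and> j' \<le> n \<longrightarrow> ?P j'" unfolding e .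
    thus ?thesis using j by blast
  qed
qed

lemma zero_down:
  fixes D a c :: "nat \<Rightarrow> real"
  assumes rec: "\<And>k. 1 \<le> k \<Longrightarrow> k \<le> n \<Longrightarrow> a k * D (k - 1) = c k * (if k < n then D (k + 1) else 0)"
    and a: "\<And>k. 1 \<le> k \<Longrightarrow> k \<le> n \<Longrightarrow> a k > 0"
    and c: "1 \<le> n - 1 \<Longrightarrow> c (n - 1) = 0"
    and n: "n \<ge> 1"
  shows "j < n \<Longrightarrow> D j = 0"
proof -
  have main: "\<forall>j. n - t \<le> j \<and> j < n \<longrightarrow> D j = 0" if "t \<le> n" for t
    using that
  proof (induction t)
    case 0 then show ?case by auto
  next
    case (Suc t)
    hence IH: "\<forall>j. n - t \<le> j \<and> j < n \<longrightarrow> D j = 0" by simp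
    define k where "k = n - t"
    have k1: "1 \<le> k" "k \<le> n" using Suc.prems by (auto simp: k_def)
    have "a k * D (k - 1) = 0"
    proof (cases "k < n")
      case False then show ?thesis using rec[OF k1] by simp
    next
      case True
      show ?thesis
      proof (cases "k + 1 < n")
        case True
        then show ?thesis using rec[OF k1] IH k_def \<open>k < n\<close> by simp
      next
        case False
        hence "k = n - 1" using True by simp
        then show ?thesis using rec[OF k1] c k1 True by simp
      qed
    qed
    hence Dk1: "D (k - 1) = 0" using a[OF k1] by simp
    show ?case
    proof (intro allI impI)
      fix j assume j: "n - Suc t \<le> j \<and> j < n"
      show "D j = 0"
      proof (cases "j = k - 1")
        case True then show ?thesis using Dk1 by simp
      next
        case False
        hence "n - t \<le> j" using j k_def Suc.prems by auto
        then show ?thesis using IH j by blast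
      qed
    qed
  qed
  show "j < n \<Longrightarrow> D j = 0"
  proof -
    assume j: "j < n"
    have e: "n - (n - j) = j" using j by simp
    have "\<forall>j'. n - (n - j) \<le> j' \<and> j' < n \<longrightarrow> D j' = 0" by (rule main) simp
    hence "\<forall>j'. j \<le> j' \<and> j' < n \<longrightarrow> D j' = 0" unfolding e .
    thus ?thesis using j by blast
  qed
qed

theorem mainTheorem3:
  fixes \<alpha> \<beta> :: real and n k :: nat
  assumes "\<alpha> > -1" and "\<beta> > -1" and "n \<ge> 1" and "k \<le> n"
  shows "(\<alpha> > \<beta> \<and> \<alpha> + \<beta> \<ge> -1 \<longrightarrow> dcoef \<alpha> \<beta> k n > 0)
       \<and> (\<alpha> < \<beta> \<and> \<alpha> + \<beta> \<ge> -1 \<longrightarrow> (-1) ^ (n - k) * dcoef \<alpha> \<beta> k n > 0)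
       \<and> (\<alpha> = \<beta> \<and> \<alpha> > -1/2 \<longrightarrow>
            (even (n - k) \<longrightarrow> dcoef \<alpha> \<beta> k n > 0) \<and>
            (odd (n - k) \<longrightarrow> dcoef \<alpha> \<beta> k n = 0))
       \<and> (\<alpha> = -1/2 \<and> \<beta> = -1/2 \<longrightarrow>
            (k = n \<longrightarrow> dcoef \<alpha> \<beta> k n > 0) \<and>
            (1 \<le> k \<and> k \<le> n - 1 \<longrightarrow> dcoef \<alpha> \<beta> k n = 0))"
proof -
  define s where "s = \<alpha> + \<beta> + 1"
  define D where "D = DD \<alpha> s n"
  have dk: "dcoef \<alpha> \<beta> k n = D k" unfolding D_def s_def by (rule dcoef_eq[OF assms(4,1)])
  define A where "A k = (real n - real k + 1) * (real n + real k - 1 + s)" for k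
  define B where "B k = 2 * (\<alpha> - \<beta>) * real k" for k
  define C where "C k = (real n + real k + 1) * (real n - real k - 1 + s)" for k
  have rec: "A k * D (k - 1) = B k * D k + C k * (if k < n then D (k + 1) else 0)"
    if "1 \<le> k" "k \<le> n" for k
    using DD_rec_gen[OF that, of \<alpha> \<beta>] unfolding A_def B_def C_def D_def s_def
    by (simp add: algebra_simps)
  have Apos: "A k > 0" if "1 \<le> k" "k \<le> n" for k
  proof -
    have "real n - real k + 1 > 0" using that by simp
    moreover have "real n + real k - 1 + s > 0" using that assms unfolding s_def by simp
    ultimately show ?thesis unfolding A_def by simp
  qed
  have Dn: "D n > 0"
  proof -
    have "real n + s > 0" using assms unfolding s_def by simp
    hence "pochhammer (real n + s) n > 0" by (rule pochhammer_pos)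
    moreover have "pochhammer (1/2::real) n > 0" by (rule pochhammer_pos) simp
    ultimately show ?thesis unfolding D_def DD_def FF_def by simp
  qed
  have part1: "dcoef \<alpha> \<beta> k n > 0" if h: "\<alpha> > \<beta>" "\<alpha> + \<beta> \<ge> -1"
  proof -
    have "D k > 0"
    proof (rule pos_down[of D n A B C, OF Dn rec Apos _ _ assms(4)])
      fix j assume "1 \<le> j" "j \<le> n"
      thus "B j > 0" unfolding B_def using h by simp
    next
      fix j assume "1 \<le> j" "j < n"
      thus "C j \<ge> 0" unfolding C_def s_def using h by simp
    qed
    thus ?thesis using dk by simp
  qed
  have part2: "(-1) ^ (n - k) * dcoef \<alpha> \<beta> k n > 0" if h: "\<alpha> < \<beta>" "\<alpha> + \<beta> \<ge> -1"
  proof -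
    define E where "E j = (-1) ^ (n - j) * D j" for j
    have recE: "A j * E (j - 1) = (- B j) * E j + C j * (if j < n then E (j + 1) else 0)"
      if "1 \<le> j" "j \<le> n" for j
    proof -
      define \<sigma> where "\<sigma> = ((-1::real) ^ (n - j))"
      have e1: "E (j - 1) = - \<sigma> * D (j - 1)"
      proof -
        have "n - (j - 1) = Suc (n - j)" using that by simp
        thus ?thesis unfolding E_def \<sigma>_def by simp
      qed
      have e2: "E j = \<sigma> * D j" unfolding E_def \<sigma>_def ..
      have e3: "(if j < n then E (j + 1) else 0) = - \<sigma> * (if j < n then D (j + 1) else 0)"
      proof (cases "j < n")
        case True
        hence "n - j = Suc (n - (j + 1))" by simp
        thus ?thesis unfolding E_def \<sigma>_def using True by simp
      qed simp
      show ?thesis unfolding e1 e2 e3 using rec[OF that] by (simp add: algebra_simps)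
    qed
    have "E n > 0" using Dn unfolding E_def by simp
    have "E k > 0"
    proof (rule pos_down[of E n A "\<lambda>j. - B j" C, OF \<open>E n > 0\<close> recE Apos _ _ assms(4)])
      fix j assume "1 \<le> j" "j \<le> n"
      hence "real j > 0" by simp
      moreover have "2 * (\<alpha> - \<beta>) < 0" using h by simp
      ultimately show "- B j > 0" unfolding B_def by (simp add: mult_neg_pos)
    next
      fix j assume "1 \<le> j" "j < n"
      thus "C j \<ge> 0" unfolding C_def s_def using h by simp
    qed
    thus ?thesis using dk unfolding E_def by simp
  qed
  have part3: "(even (n - k) \<longrightarrow> dcoef \<alpha> \<beta> k n > 0) \<and> (odd (n - k) \<longrightarrow> dcoef \<alpha> \<beta> k n = 0)"
    if h: "\<alpha> = \<beta>" "\<alpha> > -1/2"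
  proof -
    have rec0: "A j * D (j - 1) = C j * (if j < n then D (j + 1) else 0)" if "1 \<le> j" "j \<le> n" for j
      using rec[OF that] h unfolding B_def by simp
    have "(even (n - k) \<longrightarrow> D k > 0) \<and> (odd (n - k) \<longrightarrow> D k = 0)"
    proof (rule parity_down[of D n A C, OF Dn rec0 Apos _ assms(4)])
      fix j assume "1 \<le> j" "j < n"
      thus "C j > 0" unfolding C_def s_def using h by simp
    qed
    thus ?thesis using dk by simp
  qed
  have part4: "(k = n \<longrightarrow> dcoef \<alpha> \<beta> k n > 0) \<and> (1 \<le> k \<and> k \<le> n - 1 \<longrightarrow> dcoef \<alpha> \<beta> k n = 0)"
    if h: "\<alpha> = -1/2" "\<beta> = -1/2"
  proof -
    have rec0: "A j * D (j - 1) = C j * (if j < n then D (j + 1) else 0)" if "1 \<le> j" "j \<le> n" for j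
      using rec[OF that] h unfolding B_def by simp
    have c0: "C (n - 1) = 0" if "1 \<le> n - 1"
    proof -
      have "real (n - 1) = real n - 1" using that by (simp add: of_nat_diff)
      thus ?thesis unfolding C_def s_def using h by simp
    qed
    have z: "D j = 0" if "j < n" for j
      by (rule zero_down[of n A D C, OF rec0 Apos c0 assms(3) that])
    show ?thesis using dk Dn z by auto
  qed
  show ?thesis using part1 part2 part3 part4 by blast
qed

end
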